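(* Let $\lambda>0$, let $A\in\mathbb{R}^{3\times3}$ have singular values $\lambda_1\le\lambda_2\le\lambda_3$, and set $\alpha=\lambda_2\lambda_3-\lambda\lambda_1$, $\beta=\lambda_1\lambda_3-\lambda\lambda_2$, $\gamma=\lambda_1\lambda_2-\lambda\lambda_3$. Then for every $R\in SO(3)$, the quantity $g(R)=(1-R_{11})\alpha+(1-R_{22})\beta+(1-R_{33})\gamma$ satisfies $$g(R)\ge\min\{2(\beta+\gamma),0\}.$$
   Context: Singular values of $A$ are the square roots of the eigenvalues of $A^TA$; $SO(3)$ is the group of $3\times3$ orthogonal matrices of determinant $1$; $R_{ij}$ is the $(i,j)$ entry of $R$. *)

theory Defs
  imports "HOL-Analysis.Analysis"
begin

definition sorted_singular_values3 ::
  "real^3^3 \<Rightarrow> real \<Rightarrow> real \<Rightarrow> real \<Rightarrow> bool" where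
  "sorted_singular_values3 A l1 l2 l3 \<longleftrightarrow>
     0 \<le> l1 \<and> l1 \<le> l2 \<and> l2 \<le> l3 \<and>
     (\<forall>x::real. det (mat x - transpose A ** A) = (x - l1^2) * (x - l2^2) * (x - l3^2))"

definition SO3 :: "(real^3^3) set" where
  "SO3 = {R. orthogonal_matrix R \<and> det R = 1}"

end

theory Submission
  imports Defs
begin

lemma cof3:
  fixes a b c d e f g h i :: real
  assumes "a*a+b*b+c*c = 1" "a*d+b*e+c*f = 0" "a*g+b*h+c*i = 0"
    and "a*e*i + b*f*g + c*d*h - a*f*h - b*d*i - c*e*g = 1"
  shows "a = e*i - f*h"
proof -
  have eq: "(e*i-f*h)*(a*a+b*b+c*c) + (c*h-b*i)*(a*d+b*e+c*f) + (b*f-c*e)*(a*g+b*h+c*i) = a*(a*e*i + b*f*g + c*d*h - a*f*h - b*d*i - c*e*g)"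
    by algebra
  show ?thesis using eq unfolding assms by simp
qed

lemma tet:
  fixes a b c d e f g h i :: real
  assumes "a*a+b*b+c*c + (d*d+e*e+f*f) + (g*g+h*h+i*i) = 3"
    and "a = e*i - f*h" "e = a*i - c*g" "i = a*e - b*d"
  shows "1 + a + e + i \<ge> 0"
proof -
  have "4*(1+a+e+i) = (1+a+e+i)^2 + (h-f)^2 + (c-g)^2 + (d-b)^2"
  proof -
    have "(1+a+e+i)^2 + (h-f)^2 + (c-g)^2 + (d-b)^2
       = 1 + 2*(a+e+i) + (a*a+b*b+c*c + (d*d+e*e+f*f) + (g*g+h*h+i*i))
         + 2*((e*i - f*h) + (a*i - c*g) + (a*e - b*d))"
      by algebra
    moreover have s1: "(e*i - f*h) + (a*i - c*g) + (a*e - b*d) = a+e+i" using assms(2,3,4) by linarith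
    ultimately show ?thesis unfolding assms(1) by simp
  qed
  moreover have "(1+a+e+i)^2 + (h-f)^2 + (c-g)^2 + (d-b)^2 \<ge> 0" by simp
  ultimately have "4*(1+a+e+i) \<ge> 0" by simp
  then show ?thesis by simp
qed

theorem lemma4p4:
  fixes A R :: "real^3^3" and lam l1 l2 l3 \<alpha> \<beta> \<gamma> :: real
  assumes "lam > 0"
    and "sorted_singular_values3 A l1 l2 l3"
    and "\<alpha> = l2 * l3 - lam * l1"
    and "\<beta> = l1 * l3 - lam * l2"
    and "\<gamma> = l1 * l2 - lam * l3"
    and "R \<in> SO3"
  shows "(1 - R$1$1) * \<alpha> + (1 - R$2$2) * \<beta> + (1 - R$3$3) * \<gamma> \<ge> min (2 * (\<beta> + \<gamma>)) 0"
proof -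
  define a where "a = R$1$1"
  define b where "b = R$1$2"
  define c where "c = R$1$3"
  define d where "d = R$2$1"
  define e where "e = R$2$2"
  define f where "f = R$2$3"
  define g where "g = R$3$1"
  define h where "h = R$3$2"
  define i where "i = R$3$3"
  have o: "R ** transpose R = mat 1" and dt: "det R = 1"
    using assms(6) by (auto simp: SO3_def orthogonal_matrix_def)
  have E: "\<And>p q. (R ** transpose R)$p$q = R$p$1*R$q$1 + R$p$2*R$q$2 + R$p$3*R$q$3"
    by (simp add: matrix_matrix_mult_def transpose_def sum_3)
  have r11: "a*a+b*b+c*c = 1" using E[of 1 1] o by (simp add: a_def b_def c_def mat_def)
  have r22: "d*d+e*e+f*f = 1" using E[of 2 2] o by (simp add: d_def e_def f_def mat_def)
  have r33: "g*g+h*h+i*i = 1" using E[of 3 3] o by (simp add: g_def h_def i_def mat_def)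
  have r12: "a*d+b*e+c*f = 0" using E[of 1 2] o by (simp add: a_def b_def c_def d_def e_def f_def mat_def)
  have r13: "a*g+b*h+c*i = 0" using E[of 1 3] o by (simp add: a_def b_def c_def g_def h_def i_def mat_def)
  have r23: "d*g+e*h+f*i = 0" using E[of 2 3] o by (simp add: g_def h_def i_def d_def e_def f_def mat_def)
  have D: "a*e*i + b*f*g + c*d*h - a*f*h - b*d*i - c*e*g = 1"
    using dt by (simp add: det_3 a_def b_def c_def d_def e_def f_def g_def h_def i_def)
  have c1: "a = e*i - f*h" by (rule cof3[OF r11 r12 r13 D])
  have D2: "e*i*a + f*g*b + d*h*c - e*g*c - f*h*a - d*i*b = 1"
    using D by algebra
  have D3: "i*a*e + g*b*f + h*c*d - i*b*d - g*c*e - h*a*f = 1"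
    using D by algebra
  have c2: "e = i*a - g*c"
    by (rule cof3[of e f d h i g b c a, OF _ _ _ D2]) (use r22 r23 r12 in \<open>simp_all add: algebra_simps\<close>)
  have c3: "i = a*e - b*d"
    by (rule cof3[of i g h c a b f d e, OF _ _ _ D3]) (use r33 r13 r23 in \<open>simp_all add: algebra_simps\<close>)
  have S: "a*a+b*b+c*c + (d*d+e*e+f*f) + (g*g+h*h+i*i) = 3" using r11 r22 r33 by simp
  have c2': "e = a*i - c*g" using c2 by (simp add: mult.commute)
  have t0: "1 + a + e + i \<ge> 0"
    by (rule tet[OF S c1 c2' c3])
  have t1: "1 + a + (-e) + (-i) \<ge> 0"
    by (rule tet[of a "-b" "-c" d "-e" "-f" g "-h" "-i"]) (use S in simp, simp add: c1, simp add: c2', simp add: c3)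
  have t2: "1 + (-a) + e + (-i) \<ge> 0"
    by (rule tet[of "-a" b "-c" "-d" e "-f" "-g" h "-i"]) (use S in simp, simp add: c1, simp add: c2', simp add: c3)
  have t3: "1 + (-a) + (-e) + i \<ge> 0"
    by (rule tet[of "-a" "-b" c "-d" "-e" f "-g" "-h" i]) (use S in simp, simp add: c1, simp add: c2', simp add: c3)
  have l: "0 \<le> l1" "l1 \<le> l2" "l2 \<le> l3" using assms(2) by (auto simp: sorted_singular_values3_def)
  have ab: "\<alpha> \<ge> \<beta>"
  proof -
    have "\<alpha> - \<beta> = (l2 - l1)*(l3 + lam)" using assms(3,4) by (simp add: algebra_simps)
    moreover have "(l2 - l1)*(l3 + lam) \<ge> 0" using l assms(1) by simp
    ultimately show ?thesis by linarith
  qed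
  have ag: "\<alpha> \<ge> \<gamma>"
  proof -
    have "\<alpha> - \<gamma> = (l3 - l1)*(l2 + lam)" using assms(3,5) by (simp add: algebra_simps)
    moreover have "(l3 - l1)*(l2 + lam) \<ge> 0" using l assms(1) by simp
    ultimately show ?thesis by linarith
  qed
  define u1 where "u1 = (1-e)+(1-i)-(1-a)"
  define u2 where "u2 = (1-a)+(1-i)-(1-e)"
  define u3 where "u3 = (1-a)+(1-e)-(1-i)"
  have u: "u1 \<ge> 0" "u2 \<ge> 0" "u3 \<ge> 0" "u1+u2+u3 \<le> 4"
    using t0 t1 t2 t3 by (auto simp: u1_def u2_def u3_def)
  have gexp: "(1 - a) * \<alpha> + (1 - e) * \<beta> + (1 - i) * \<gamma>
      = u1*(\<beta>+\<gamma>)/2 + u2*(\<alpha>+\<gamma>)/2 + u3*(\<alpha>+\<beta>)/2"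
    by (simp add: u1_def u2_def u3_def field_simps)
  have m2: "u2*(\<alpha>+\<gamma>) \<ge> u2*(\<beta>+\<gamma>)" using u ab by (intro mult_left_mono) auto
  have m3: "u3*(\<alpha>+\<beta>) \<ge> u3*(\<beta>+\<gamma>)" using u ag by (intro mult_left_mono) auto
  have low: "(1 - a) * \<alpha> + (1 - e) * \<beta> + (1 - i) * \<gamma> \<ge> (u1+u2+u3)*(\<beta>+\<gamma>)/2"
  proof -
    have "(u1+u2+u3)*(\<beta>+\<gamma>) = u1*(\<beta>+\<gamma>) + u2*(\<beta>+\<gamma>) + u3*(\<beta>+\<gamma>)" by algebra
    then show ?thesis using gexp m2 m3 by linarith
  qed
  have "(u1+u2+u3)*(\<beta>+\<gamma>)/2 \<ge> min (2 * (\<beta> + \<gamma>)) 0"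
  proof (cases "\<beta>+\<gamma> \<ge> 0")
    case True
    then have "(u1+u2+u3)*(\<beta>+\<gamma>) \<ge> 0" using u by simp
    moreover have "min (2 * (\<beta> + \<gamma>)) 0 \<le> 0" by simp
    ultimately show ?thesis by linarith
  next
    case False
    then have "(u1+u2+u3)*(\<beta>+\<gamma>) \<ge> 4*(\<beta>+\<gamma>)" using u by (intro mult_right_mono_neg) auto
    moreover have "min (2 * (\<beta> + \<gamma>)) 0 \<le> 2 * (\<beta> + \<gamma>)" by simp
    ultimately show ?thesis by linarith
  qed
  with low show ?thesis by (simp add: a_def e_def i_def)
qed

end
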